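(* Let $f(x)=1-|1-2x|$ be the tent map, let $g:[0,1]\to[0,1]$ be a piecewise linear unimodal map, and let $h:[0,1]\to[0,1]$ be a homeomorphism with $h\circ f=g\circ h$. Let $\psi:[0,1]\to[0,1]$ be a continuous non-constant map with $g\circ\psi=\psi\circ g$, and suppose $[0,1]$ splits into exactly $t\ge 1$ maximal intervals of monotonicity of $\psi$. Then $\psi=h\circ\xi_t\circ h^{-1}$, where $$\xi_t(x)=\frac{1-(-1)^{[tx]}}{2}+(-1)^{[tx]}\{tx\},\quad x\in[0,1].$$
   Context: $[\cdot]$ denotes the integer part and $\{\cdot\}$ the fractional part of a real number; thus $\xi_t$ is the continuous piecewise linear map with $\xi_t(0)=0$, slopes $\pm t$, and all kinks at the points $j/t$, where it alternately takes the values $1$ and $0$. A map $g:[0,1]\to[0,1]$ is called unimodal if there is $v\in(0,1)$ such that $g$ is increasing on $[0,v]$, decreasing on $[v,1]$, and $g(0)=g(1)=0$, $g(v)=1$. *)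

theory Defs
  imports "HOL-Analysis.Analysis"
begin

definition tent :: "real \<Rightarrow> real" where
  "tent x = 1 - \<bar>1 - 2 * x\<bar>"

definition xi :: "nat \<Rightarrow> real \<Rightarrow> real" where
  "xi t x = (1 - (-1) powi \<lfloor>real t * x\<rfloor>) / 2 + (-1) powi \<lfloor>real t * x\<rfloor> * frac (real t * x)"

definition unimodal :: "(real \<Rightarrow> real) \<Rightarrow> bool" where
  "unimodal g \<longleftrightarrow> (\<exists>v \<in> {0<..<1}.
      monotone_on {0..v} (\<le>) (\<le>) g \<and> monotone_on {v..1} (\<le>) (\<ge>) g \<and>
      g 0 = 0 \<and> g 1 = 0 \<and> g v = 1)"

definition piecewise_linear :: "(real \<Rightarrow> real) \<Rightarrow> bool" where
  "piecewise_linear g \<longleftrightarrow> (\<exists>n::nat. \<exists>p::nat \<Rightarrow> real. n \<ge> 1 \<and> p 0 = 0 \<and> p n = 1 \<and>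
      (\<forall>i<n. p i < p (Suc i)) \<and>
      (\<forall>i<n. \<exists>m c. \<forall>x \<in> {p i..p (Suc i)}. g x = m * x + c))"

definition monotone_piece :: "(real \<Rightarrow> real) \<Rightarrow> real set \<Rightarrow> bool" where
  "monotone_piece \<psi> S \<longleftrightarrow> monotone_on S (\<le>) (\<le>) \<psi> \<or> monotone_on S (\<le>) (\<ge>) \<psi>"

definition monotonicity_laps :: "(real \<Rightarrow> real) \<Rightarrow> nat \<Rightarrow> bool" where
  "monotonicity_laps \<psi> t \<longleftrightarrow> (\<exists>a::nat \<Rightarrow> real. a 0 = 0 \<and> a t = 1 \<and>
      (\<forall>i<t. a i < a (Suc i)) \<and>
      (\<forall>i<t. monotone_piece \<psi> {a i..a (Suc i)}) \<and>
      (\<forall>i. Suc i < t \<longrightarrow> \<not> monotone_piece \<psi> {a i..a (Suc (Suc i))}))"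

end

theory Submission
  imports Defs
begin


definition P :: "real \<Rightarrow> real" where
  "P z = (1 - (-1) powi \<lfloor>z\<rfloor>) / 2 + (-1) powi \<lfloor>z\<rfloor> * frac z"

lemma xi_P: "xi t x = P (real t * x)"
  by (simp add: xi_def P_def)

lemma m1_powi: "(-1::real) powi n = (if even n then 1 else -1)"
proof (cases "n \<ge> 0")
  case True
  then obtain m where "n = int m" by (metis nonneg_eq_int)
  then show ?thesis by (simp add: power_int_def)
next
  case False
  then obtain m where "n = - int m" by (metis minus_minus neg_0_le_iff_le nonneg_eq_int le_cases)
  then show ?thesis using power_int_minus_one_minus[of "int m", where 'a=real]
    by (simp add: power_int_def)
qed

lemma P_int_add:
  fixes n :: int and r :: real
  assumes "0 \<le> r" "r \<le> 1"
  shows "P (of_int n + r) = (if even n then r else 1 - r)"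
proof (cases "r < 1")
  case True
  have fl: "\<lfloor>of_int n + r\<rfloor> = n" using assms True by (simp add: floor_eq_iff)
  have fr: "frac (of_int n + r) = r" using assms True by (simp add: frac_def fl)
  show ?thesis unfolding P_def fl fr m1_powi by simp
next
  case False
  then have r: "r = 1" using assms by simp
  have fl: "\<lfloor>of_int n + r\<rfloor> = n + 1" using r by simp
  have fr: "frac (of_int n + r) = 0" using r by (simp add: frac_def fl)
  show ?thesis unfolding P_def fl fr m1_powi using r by simp
qed

lemma P_decomp: "\<exists>n::int. \<exists>r. 0 \<le> r \<and> r < 1 \<and> (z::real) = of_int n + r"
  by (rule exI[of _ "\<lfloor>z\<rfloor>"], rule exI[of _ "frac z"]) (simp add: frac_def; linarith)

lemma P_range: "0 \<le> P z \<and> P z \<le> 1"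
  using P_decomp[of z] P_int_add by fastforce

lemma P_id: "0 \<le> x \<Longrightarrow> x \<le> 1 \<Longrightarrow> P x = x"
  using P_int_add[of x 0] by simp

lemma tent_sym: "tent (1 - x) = tent x"
  by (simp add: tent_def abs_minus_commute) 

lemma tent_P: "tent (P z) = P (2 * z)"
proof -
  obtain n r where nr: "0 \<le> r" "r < 1" "z = of_int n + r" using P_decomp by blast
  have tr: "tent (P z) = tent r"
    using P_int_add[of r n] nr tent_sym[of r] by (auto simp: algebra_simps)
  show ?thesis
  proof (cases "r \<le> 1/2")
    case True
    have "P (2*z) = P (of_int (2*n) + 2*r)" using nr by (simp add: algebra_simps)
    also have "\<dots> = 2*r" using True nr by (subst P_int_add) auto
    finally show ?thesis using tr True nr by (simp add: tent_def)
  next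
    case False
    have "P (2*z) = P (of_int (2*n+1) + (2*r - 1))" using nr by (simp add: algebra_simps)
    also have "\<dots> = 2 - 2*r" using False nr by (subst P_int_add) auto
    finally show ?thesis using tr False nr by (simp add: tent_def)
  qed
qed

lemma P_neg: "P (- z) = P z"
proof -
  obtain n r where nr: "0 \<le> r" "r < 1" "z = of_int n + r" using P_decomp by blast
  show ?thesis
  proof (cases "r = 0")
    case True
    have "P (-z) = P (of_int (-n-1) + 1)" using nr True by simp
    also have "\<dots> = (if even n then 0 else 1)" by (subst P_int_add) auto
    also have "\<dots> = P (of_int n + 0)" by (subst P_int_add) auto
    finally show ?thesis using nr True by simp
  next
    case False
    have "P (-z) = P (of_int (-n-1) + (1 - r))" using nr by (simp add: algebra_simps)
    also have "\<dots> = P (of_int n + r)" using nr False by (subst P_int_add; simp)+ 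
    finally show ?thesis using nr by simp
  qed
qed

lemma P_shift: "P (z + 2 * of_int m) = P z"
proof -
  obtain n r where nr: "0 \<le> r" "r < 1" "z = of_int n + r" using P_decomp by blast
  have "P (z + 2 * of_int m) = P (of_int (n + 2*m) + r)" using nr by (simp add: algebra_simps)
  also have "\<dots> = P z" using nr by (subst P_int_add; simp)+
  finally show ?thesis .
qed

lemma tent_01: "0 \<le> x \<Longrightarrow> x \<le> 1 \<Longrightarrow> 0 \<le> tent x \<and> tent x \<le> 1"
  by (simp add: tent_def)

lemma xi_comm:
  assumes "0 \<le> x" "x \<le> 1"
  shows "xi t (tent x) = tent (xi t x)"
proof (cases "x \<le> 1/2")
  case True
  then have "tent x = 2 * x" by (simp add: tent_def)
  then show ?thesis by (simp add: xi_P tent_P algebra_simps)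
next
  case False
  have "xi t (tent x) = P (real t * (2 - 2*x))" using False by (simp add: xi_P tent_def)
  also have "\<dots> = P (- (2 * (real t * x)) + 2 * of_int (int t))" by (simp add: algebra_simps)
  also have "\<dots> = P (2 * (real t * x))" by (simp only: P_shift P_neg)
  finally show ?thesis by (simp add: xi_P tent_P)
qed

lemma tent_pow: "0 \<le> x \<Longrightarrow> x \<le> 1 \<Longrightarrow> (tent ^^ n) x = P (2^n * x)"
proof (induction n)
  case 0 then show ?case by (simp add: P_id)
next
  case (Suc n) then show ?case by (simp add: tent_P algebra_simps)
qed



definition LM :: "(real \<Rightarrow> real) \<Rightarrow> real \<Rightarrow> bool" where
  "LM h x \<longleftrightarrow> (\<exists>\<delta>>0. 0 \<le> x - \<delta> \<and> x + \<delta> \<le> 1 \<and> monotone_piece h {x-\<delta>..x+\<delta>})"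

lemma LM_cong: "(\<And>y. 0 \<le> y \<Longrightarrow> y \<le> 1 \<Longrightarrow> h1 y = h2 y) \<Longrightarrow> LM h1 x = LM h2 x"
proof -
  assume h: "\<And>y. 0 \<le> y \<Longrightarrow> y \<le> 1 \<Longrightarrow> h1 y = h2 y"
  have *: "monotone_piece h1 {x-\<delta>..x+\<delta>} = monotone_piece h2 {x-\<delta>..x+\<delta>}"
    if "0 \<le> x - \<delta>" "x + \<delta> \<le> 1" for \<delta>
  proof -
    have "\<forall>y\<in>{x-\<delta>..x+\<delta>}. h1 y = h2 y" using h that by auto
    then show ?thesis unfolding monotone_piece_def monotone_on_def by auto
  qed
  show ?thesis unfolding LM_def using * by blast
qed

lemma chain_less:
  fixes c :: "nat \<Rightarrow> real"
  assumes "\<forall>j<N. c j < c (Suc j)"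
  shows "i < j \<Longrightarrow> j \<le> N \<Longrightarrow> c i < c j"
proof (induction j)
  case 0 then show ?case by simp
next
  case (Suc j)
  have jN: "j < N" using Suc.prems by simp
  have step: "c j < c (Suc j)" using assms jN by blast
  show ?case
  proof (cases "i = j")
    case True then show ?thesis using step by simp
  next
    case False
    then have "i < j" using Suc.prems by simp
    then have "c i < c j" using Suc.IH jN by simp
    then show ?thesis using step by simp
  qed
qed

lemma enum_card:
  fixes c :: "nat \<Rightarrow> real"
  assumes "\<forall>i j. i < j \<longrightarrow> j \<le> N \<longrightarrow> c i < c j" "j \<le> N"
  shows "card {s \<in> c ` {..N}. s < c j} = j"
proof -
  have "{s \<in> c ` {..N}. s < c j} = c ` {..<j}"
  proof
    show "{s \<in> c ` {..N}. s < c j} \<subseteq> c ` {..<j}"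
    proof
      fix s assume "s \<in> {s \<in> c ` {..N}. s < c j}"
      then obtain k where k: "k \<le> N" "s = c k" "c k < c j" by auto
      have "k < j"
      proof (rule ccontr)
        assume "\<not> k < j"
        then have "j = k \<or> j < k" by auto
        then show False
        proof
          assume "j = k" then show False using k by simp
        next
          assume "j < k" then have "c j < c k" using assms(1) k(1) by blast
          then show False using k by simp
        qed
      qed
      then show "s \<in> c ` {..<j}" using k by auto
    qed
  next
    show "c ` {..<j} \<subseteq> {s \<in> c ` {..N}. s < c j}"
    proof
      fix s assume "s \<in> c ` {..<j}"
      then obtain k where k: "k < j" "s = c k" by auto
      then have "c k < c j" using assms by blast
      then show "s \<in> {s \<in> c ` {..N}. s < c j}" using k assms(2) by auto
    qed
  qed
  moreover have "inj_on c {..<j}"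
  proof (rule inj_onI)
    fix x y assume "x \<in> {..<j}" "y \<in> {..<j}" "c x = c y"
    then have xy: "x < j" "y < j" "c x = c y" by auto
    show "x = y"
    proof (rule ccontr)
      assume "x \<noteq> y"
      then consider "x < y" | "y < x" by linarith
      then show False
      proof cases
        case 1
        have "y \<le> N" using xy assms(2) by simp
        then have "c x < c y" using assms(1) 1 by blast
        then show False using xy by simp
      next
        case 2
        have "x \<le> N" using xy assms(2) by simp
        then have "c y < c x" using assms(1) 2 by blast
        then show False using xy by simp
      qed
    qed
  qed
  ultimately show ?thesis by (simp add: card_image)
qed

lemma enum_unique:
  fixes c d :: "nat \<Rightarrow> real"
  assumes c: "\<forall>i j. i < j \<longrightarrow> j \<le> N \<longrightarrow> c i < c j"
    and d: "\<forall>i j. i < j \<longrightarrow> j \<le> N \<longrightarrow> d i < d j"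
    and eq: "c ` {..N} = d ` {..N}" and j: "j \<le> N"
  shows "c j = d j"
proof -
  have "c j \<in> d ` {..N}" using eq j by (simp add: eq[symmetric])
  then obtain k where k: "k \<le> N" "c j = d k" by auto
  have "j = card {s \<in> c ` {..N}. s < c j}" using enum_card[OF c j] by simp
  also have "\<dots> = card {s \<in> d ` {..N}. s < d k}" using eq k by simp
  also have "\<dots> = k" using enum_card[OF d k(1)] .
  finally show ?thesis using k by simp
qed

locale comm_setup =
  fixes \<phi> :: "real \<Rightarrow> real" and t :: nat and a :: "nat \<Rightarrow> real"
  assumes cont: "continuous_on {0..1} \<phi>"
  and maps: "\<And>x. 0 \<le> x \<Longrightarrow> x \<le> 1 \<Longrightarrow> 0 \<le> \<phi> x \<and> \<phi> x \<le> 1"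
  and comm: "\<And>x. 0 \<le> x \<Longrightarrow> x \<le> 1 \<Longrightarrow> \<phi> (tent x) = tent (\<phi> x)"
  and nonconst: "\<exists>x\<in>{0..1}. \<exists>y\<in>{0..1}. \<phi> x \<noteq> \<phi> y"
  and tpos: "t \<ge> 1"
  and a0: "a 0 = 0" and at: "a t = 1" and ainc: "\<forall>i<t. a i < a (Suc i)"
  and pieces: "\<forall>i<t. monotone_piece \<phi> {a i..a (Suc i)}"
  and maximal: "\<forall>i. Suc i < t \<longrightarrow> \<not> monotone_piece \<phi> {a i..a (Suc (Suc i))}"
begin

lemma a_less: "i < j \<Longrightarrow> j \<le> t \<Longrightarrow> a i < a j"
  by (rule chain_less[OF ainc])

lemma a_le: "a i \<le> a j" if "i \<le> j" "j \<le> t"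
proof (cases "i = j")
  case False then have "i < j" using that by simp
  then show ?thesis using a_less[of i j] that by simp
qed simp

lemma a_range: "i \<le> t \<Longrightarrow> 0 \<le> a i \<and> a i \<le> 1"
  using a_le[of 0 i] a_le[of i t] a0 at by auto

lemma locate:
  assumes "0 \<le> x" "x \<le> 1"
  shows "\<exists>i<t. a i \<le> x \<and> x \<le> a (Suc i)"
proof -
  define I where "I = {i. i < t \<and> a i \<le> x}"
  have fin: "finite I" unfolding I_def by auto
  have ne: "0 \<in> I" unfolding I_def using tpos a0 assms by auto
  define i where "i = Max I"
  have iI: "i \<in> I" unfolding i_def using fin ne Max_in by blast
  have "x \<le> a (Suc i)"
  proof (cases "Suc i < t")
    case True
    then have "Suc i \<notin> I" using Max_ge[OF fin, of "Suc i"] unfolding i_def by auto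
    then show ?thesis using True unfolding I_def by auto
  next
    case False
    then have "Suc i = t" using iI unfolding I_def by auto
    then show ?thesis using at assms by auto
  qed
  then show ?thesis using iI unfolding I_def by auto
qed

lemma locate_strict:
  assumes "0 < x" "x < 1" "\<forall>j\<le>t. x \<noteq> a j"
  shows "\<exists>i<t. a i < x \<and> x < a (Suc i)"
proof -
  have "0 \<le> x" "x \<le> 1" using assms by auto
  then obtain i where "i < t" "a i \<le> x" "x \<le> a (Suc i)" using locate by blast
  moreover have "x \<noteq> a i" "x \<noteq> a (Suc i)" using assms(3) \<open>i < t\<close> by auto
  ultimately have "i < t \<and> a i < x \<and> x < a (Suc i)" by simp
  then show ?thesis by blast
qed

lemma comm_pow: "0 \<le> x \<Longrightarrow> x \<le> 1 \<Longrightarrow> \<phi> ((tent ^^ n) x) = (tent ^^ n) (\<phi> x)"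
proof (induction n)
  case 0 then show ?case by simp
next
  case (Suc n)
  have "(tent ^^ n) x = P (2^n * x)" using Suc.prems by (rule tent_pow)
  then have r: "0 \<le> (tent ^^ n) x" "(tent ^^ n) x \<le> 1" using P_range by auto
  have "\<phi> ((tent ^^ Suc n) x) = \<phi> (tent ((tent ^^ n) x))" by simp
  also have "\<dots> = tent (\<phi> ((tent ^^ n) x))" using comm[OF r] .
  also have "\<dots> = tent ((tent ^^ n) (\<phi> x))" using Suc.IH Suc.prems by simp
  finally show ?case by simp
qed

lemma noflat:
  assumes uv: "0 \<le> u" "u < v" "v \<le> 1" and const: "\<forall>x\<in>{u..v}. \<phi> x = \<phi> u"
  shows False
proof -
  obtain n where n: "2 / (v - u) < 2 ^ n" using real_arch_pow[of 2 "2/(v-u)"] by auto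
  have vu: "v - u > 0" using uv by simp
  have "2 / (v - u) * (v - u) < 2^n * (v - u)" using n vu by (rule mult_strict_right_mono)
  moreover have "2 / (v - u) * (v - u) = 2"
  proof -
    have ne: "v - u \<noteq> 0" using vu by simp
    show ?thesis by (simp only: divide_inverse mult.assoc left_inverse[OF ne] mult_1_right)
  qed
  ultimately have n2: "2 \<le> 2^n * (v - u)" by linarith
  define j where "j = \<lceil>2^n * u\<rceil>"
  have j1: "2^n * u \<le> of_int j" unfolding j_def by simp
  have n2': "2 \<le> 2^n * v - 2^n * u" using n2 by (simp add: right_diff_distrib)
  have "of_int j - 1 < 2^n * u" unfolding j_def using ceiling_correct[of "2^n*u"] by blast
  then have j2: "of_int j + 1 \<le> 2^n * v" using n2' by linarith
  have "\<forall>s\<in>{0..1}. \<phi> s = (tent ^^ n) (\<phi> u)"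
  proof
    fix s :: real assume s: "s \<in> {0..1}"
    define r where "r = (if even j then s else 1 - s)"
    have r01: "0 \<le> r" "r \<le> 1" using s unfolding r_def by auto
    define y where "y = (of_int j + r) / 2^n"
    have p: "(0::real) < 2^n" by simp
    have "u * 2^n \<le> of_int j + r" using j1 r01 by (simp add: mult.commute)
    then have y1: "u \<le> y" unfolding y_def using p by (simp add: pos_le_divide_eq)
    have "of_int j + r \<le> v * 2^n" using j2 r01 by (simp add: mult.commute)
    then have y2: "y \<le> v" unfolding y_def using p by (simp add: pos_divide_le_eq)
    note yuv = y1 y2
    have y01: "0 \<le> y" "y \<le> 1" using yuv uv by auto
    have "(tent ^^ n) y = P (2^n * y)" using tent_pow[OF y01] by simp
    also have "2^n * y = of_int j + r" unfolding y_def by simp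
    finally have "(tent ^^ n) y = P (of_int j + r)" .
    also have "\<dots> = s" using P_int_add[OF r01] unfolding r_def by auto
    finally have "\<phi> s = \<phi> ((tent ^^ n) y)" by simp
    also have "\<dots> = (tent ^^ n) (\<phi> y)" using comm_pow yuv uv by simp
    also have "\<dots> = (tent ^^ n) (\<phi> u)"
    proof -
      have e: "\<phi> y = \<phi> u" using bspec[OF const, of y] yuv by simp
      show ?thesis by (simp only: e)
    qed
    finally show "\<phi> s = (tent ^^ n) (\<phi> u)" .
  qed
  then have C: "\<And>s. s \<in> {0..1} \<Longrightarrow> \<phi> s = (tent ^^ n) (\<phi> u)" by blast
  from nonconst obtain x y where "x \<in> {0..1}" "y \<in> {0..1}" "\<phi> x \<noteq> \<phi> y" by blast
  then show False using C[of x] C[of y] by simp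
qed

definition SI :: "real set \<Rightarrow> bool" where
  "SI S \<longleftrightarrow> (\<forall>x\<in>S. \<forall>y\<in>S. x < y \<longrightarrow> \<phi> x < \<phi> y)"
definition SD :: "real set \<Rightarrow> bool" where
  "SD S \<longleftrightarrow> (\<forall>x\<in>S. \<forall>y\<in>S. x < y \<longrightarrow> \<phi> x > \<phi> y)"

lemma lap_strict:
  assumes "i < t"
  shows "SI {a i..a (Suc i)} \<or> SD {a i..a (Suc i)}"
proof -
  have r: "0 \<le> a i" "a (Suc i) \<le> 1" using a_range assms by auto
  have "monotone_piece \<phi> {a i..a (Suc i)}" using pieces assms by auto
  then show ?thesis
  proof (unfold monotone_piece_def, elim disjE)
    assume m: "monotone_on {a i..a (Suc i)} (\<le>) (\<le>) \<phi>"
    have "SI {a i..a (Suc i)}" unfolding SI_def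
    proof (intro ballI impI)
      fix x y assume xy: "x \<in> {a i..a (Suc i)}" "y \<in> {a i..a (Suc i)}" "x < y"
      have le: "\<phi> x \<le> \<phi> y" using m xy unfolding monotone_on_def by auto
      show "\<phi> x < \<phi> y"
      proof (rule ccontr)
        assume "\<not> \<phi> x < \<phi> y"
        then have eq: "\<phi> x = \<phi> y" using le by simp
        have "\<forall>z\<in>{x..y}. \<phi> z = \<phi> x"
        proof
          fix z assume "z \<in> {x..y}"
          then have "\<phi> x \<le> \<phi> z" "\<phi> z \<le> \<phi> y" using m xy unfolding monotone_on_def by auto
          then show "\<phi> z = \<phi> x" using eq by simp
        qed
        moreover have "0 \<le> x" "x < y" "y \<le> 1" using xy r by auto
        ultimately show False using noflat[of x y] by blast
      qed
    qed
    then show ?thesis ..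
  next
    assume m: "monotone_on {a i..a (Suc i)} (\<le>) (\<ge>) \<phi>"
    have "SD {a i..a (Suc i)}" unfolding SD_def
    proof (intro ballI impI)
      fix x y assume xy: "x \<in> {a i..a (Suc i)}" "y \<in> {a i..a (Suc i)}" "x < y"
      have le: "\<phi> x \<ge> \<phi> y" using m xy unfolding monotone_on_def by auto
      show "\<phi> x > \<phi> y"
      proof (rule ccontr)
        assume "\<not> \<phi> x > \<phi> y"
        then have eq: "\<phi> x = \<phi> y" using le by simp
        have "\<forall>z\<in>{x..y}. \<phi> z = \<phi> x"
        proof
          fix z assume "z \<in> {x..y}"
          then have "\<phi> x \<ge> \<phi> z" "\<phi> z \<ge> \<phi> y" using m xy unfolding monotone_on_def by auto
          then show "\<phi> z = \<phi> x" using eq by simp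
        qed
        moreover have "0 \<le> x" "x < y" "y \<le> 1" using xy r by auto
        ultimately show False using noflat[of x y] by blast
      qed
    qed
    then show ?thesis ..
  qed
qed

end


lemma mp_cong: "(\<forall>z\<in>S. F z = G z) \<Longrightarrow> monotone_piece F S = monotone_piece G S"
  unfolding monotone_piece_def monotone_on_def by auto

lemma mp_subset: "monotone_piece F S \<Longrightarrow> T \<subseteq> S \<Longrightarrow> monotone_piece F T"
  unfolding monotone_piece_def using monotone_on_subset by blast

lemma mp_comp_inc:
  assumes "monotone_piece F S" "\<forall>z\<in>T. g z \<in> S" "\<forall>z1\<in>T. \<forall>z2\<in>T. z1 \<le> z2 \<longrightarrow> g z1 \<le> g z2"
  shows "monotone_piece (\<lambda>z. F (g z)) T"
  using assms unfolding monotone_piece_def monotone_on_def by (elim disjE) (blast, blast)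

lemma mp_comp_dec:
  assumes "monotone_piece F S" "\<forall>z\<in>T. g z \<in> S" "\<forall>z1\<in>T. \<forall>z2\<in>T. z1 \<le> z2 \<longrightarrow> g z2 \<le> g z1"
  shows "monotone_piece (\<lambda>z. F (g z)) T"
  using assms unfolding monotone_piece_def monotone_on_def by (elim disjE) (blast, blast)

lemma tent_half: "x \<le> 1/2 \<Longrightarrow> tent x = 2 * x" by (simp add: tent_def)
lemma tent_half2: "x \<ge> 1/2 \<Longrightarrow> tent x = 2 - 2 * x" by (simp add: tent_def)

lemma mp_tent1: "monotone_piece tent {..1/2}"
  unfolding monotone_piece_def monotone_on_def by (auto simp: tent_half)
lemma mp_tent2: "monotone_piece tent {1/2..}"
  unfolding monotone_piece_def monotone_on_def by (auto simp: tent_half2)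

context comm_setup begin

lemma phi0: "\<phi> 0 = 0"
proof -
  have "\<phi> 0 = tent (\<phi> 0)" using comm[of 0] by (simp add: tent_def)
  then have fx: "\<phi> 0 = 1 - \<bar>1 - 2 * \<phi> 0\<bar>" by (simp add: tent_def)
  have "\<phi> 0 = 0 \<or> \<phi> 0 = 2/3"
  proof (cases "1 - 2 * \<phi> 0 \<ge> 0")
    case True then show ?thesis using fx by simp
  next
    case False then show ?thesis using fx by simp
  qed
  moreover have "\<phi> 0 \<noteq> 2/3"
  proof
    assume p0: "\<phi> 0 = 2/3"
    have a1: "0 < a 1" "a 1 \<le> 1" using a_less[of 0 1] a_range[of 1] tpos a0 by auto
    define x where "x = a 1 / 2"
    have x: "0 < x" "x < a 1" "x \<le> 1/2" using a1 unfolding x_def by auto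
    have tx: "tent x = a 1" using x unfolding x_def by (simp add: tent_half)
    have ph: "\<phi> (a 1) = tent (\<phi> x)" using comm[of x] x a1 tx by simp
    have mx: "0 \<le> \<phi> x" "\<phi> x \<le> 1" using maps[of x] x a1 by auto
    have lap: "0 \<in> {a 0..a (Suc 0)}" "x \<in> {a 0..a (Suc 0)}" "a 1 \<in> {a 0..a (Suc 0)}"
      using x a1 a0 by auto
    have "0 < t" using tpos by simp
    from lap_strict[OF this] show False
    proof
      assume "SI {a 0..a (Suc 0)}"
      then have "\<phi> 0 < \<phi> x" "\<phi> x < \<phi> (a 1)" using lap x unfolding SI_def by auto
      then show False using p0 ph mx by (simp add: tent_def)
    next
      assume "SD {a 0..a (Suc 0)}"
      then have "\<phi> 0 > \<phi> x" "\<phi> x > \<phi> (a 1)" using lap x unfolding SD_def by auto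
      then show False using p0 ph mx by (cases "\<phi> x \<le> 1/2") (simp_all add: tent_def)
    qed
  qed
  ultimately show ?thesis by simp
qed

end


context comm_setup begin

lemma SI_mono: "SI S \<Longrightarrow> monotone_on S (\<le>) (\<le>) \<phi>"
  unfolding SI_def monotone_on_def by (metis less_eq_real_def)
lemma SD_mono: "SD S \<Longrightarrow> monotone_on S (\<le>) (\<ge>) \<phi>"
  unfolding SD_def monotone_on_def by (metis less_eq_real_def)

lemma lap_mp: "i < t \<Longrightarrow> monotone_piece \<phi> {a i..a (Suc i)}"
  using pieces by blast

lemma notLM_a:
  assumes i: "0 < i" "i < t"
  shows "\<not> LM \<phi> (a i)"
proof
  assume "LM \<phi> (a i)"
  then obtain \<delta> where d: "\<delta> > 0" "monotone_piece \<phi> {a i - \<delta>..a i + \<delta>}" unfolding LM_def by blast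
  obtain m where m: "i = Suc m" using i by (cases i) auto
  define u where "u = a m"
  define c where "c = a i"
  define w where "w = a (Suc i)"
  have uc: "u < c" "c < w" unfolding u_def c_def w_def using a_less i m by auto
  have L1: "SI {u..c} \<or> SD {u..c}" using lap_strict[of m] i m unfolding u_def c_def by auto
  have L2: "SI {c..w} \<or> SD {c..w}" using lap_strict[of i] i unfolding c_def w_def by auto
  have nm: "\<not> monotone_piece \<phi> {u..w}" using maximal i m unfolding u_def w_def by auto
  define e where "e = min \<delta> (min (c - u) (w - c))"
  have e: "0 < e" "e \<le> \<delta>" "e \<le> c - u" "e \<le> w - c" unfolding e_def using d uc by auto
  define p where "p = c - e"
  define q where "q = c + e"
  have mb: "monotone_piece \<phi> {p..q}" using mp_subset[OF d(2)] e unfolding p_def q_def c_def by auto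
  have pq: "p \<in> {u..c}" "q \<in> {c..w}" "p < c" "c < q" "p \<in> {p..q}" "q \<in> {p..q}" "c \<in> {p..q}"
    "c \<in> {u..c}" "c \<in> {c..w}" unfolding p_def q_def using e uc by auto
  from L1 show False
  proof
    assume s1: "SI {u..c}"
    from L2 show False
    proof
      assume s2: "SI {c..w}"
      have "monotone_on {u..w} (\<le>) (\<le>) \<phi>"
        unfolding monotone_on_def
      proof (intro ballI impI)
        fix x y assume xy: "x \<in> {u..w}" "y \<in> {u..w}" "x \<le> y"
        show "\<phi> x \<le> \<phi> y"
        proof (cases "y \<le> c")
          case True then show ?thesis using SI_mono[OF s1] xy unfolding monotone_on_def by auto
        next
          case False
          show ?thesis
          proof (cases "x \<ge> c")
            case True then show ?thesis using SI_mono[OF s2] xy unfolding monotone_on_def by auto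
          next
            case False
            have "\<phi> x \<le> \<phi> c" using SI_mono[OF s1] xy False pq unfolding monotone_on_def by auto
            moreover have "\<phi> c \<le> \<phi> y" using SI_mono[OF s2] xy \<open>\<not> y \<le> c\<close> pq unfolding monotone_on_def by auto
            ultimately show ?thesis by simp
          qed
        qed
      qed
      then show False using nm unfolding monotone_piece_def by blast
    next
      assume s2: "SD {c..w}"
      have "\<phi> p < \<phi> c" using s1 pq unfolding SI_def by auto
      moreover have "\<phi> q < \<phi> c" using s2 pq unfolding SD_def by auto
      ultimately show False using mb pq unfolding monotone_piece_def monotone_on_def
        by (meson not_le order.strict_iff_not less_imp_le)
    qed
  next
    assume s1: "SD {u..c}"
    from L2 show False
    proof
      assume s2: "SD {c..w}"
      have "monotone_on {u..w} (\<le>) (\<ge>) \<phi>"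
        unfolding monotone_on_def
      proof (intro ballI impI)
        fix x y assume xy: "x \<in> {u..w}" "y \<in> {u..w}" "x \<le> y"
        show "\<phi> x \<ge> \<phi> y"
        proof (cases "y \<le> c")
          case True then show ?thesis using SD_mono[OF s1] xy unfolding monotone_on_def by auto
        next
          case False
          show ?thesis
          proof (cases "x \<ge> c")
            case True then show ?thesis using SD_mono[OF s2] xy unfolding monotone_on_def by auto
          next
            case False
            have "\<phi> x \<ge> \<phi> c" using SD_mono[OF s1] xy False pq unfolding monotone_on_def by auto
            moreover have "\<phi> c \<ge> \<phi> y" using SD_mono[OF s2] xy \<open>\<not> y \<le> c\<close> pq unfolding monotone_on_def by auto
            ultimately show ?thesis by simp
          qed
        qed
      qed
      then show False using nm unfolding monotone_piece_def by blast
    next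
      assume s2: "SI {c..w}"
      have "\<phi> p > \<phi> c" using s1 pq unfolding SD_def by auto
      moreover have "\<phi> q > \<phi> c" using s2 pq unfolding SI_def by auto
      ultimately show False using mb pq unfolding monotone_piece_def monotone_on_def
        by (meson not_le order.strict_iff_not less_imp_le)
    qed
  qed
qed

end


context comm_setup begin

lemma LM_tent:
  assumes x: "0 < x" "x < 1" "x \<noteq> 1/2" and lm: "LM (\<lambda>y. \<phi> (tent y)) x"
  shows "LM \<phi> (tent x)"
proof -
  obtain \<delta> where d: "\<delta> > 0" "monotone_piece (\<lambda>y. \<phi> (tent y)) {x - \<delta>..x + \<delta>}"
    using lm unfolding LM_def by blast
  show ?thesis
  proof (cases "x < 1/2")
    case True
    define e where "e = min \<delta> (min x (1/2 - x))"
    have e: "0 < e" "e \<le> \<delta>" "e \<le> x" "e \<le> 1/2 - x" unfolding e_def using d x True by auto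
    have m1: "monotone_piece (\<lambda>y. \<phi> (tent y)) {x - e..x + e}" using mp_subset[OF d(2)] e by auto
    have m2: "monotone_piece (\<lambda>z. \<phi> (tent (z / 2))) {2*x - 2*e..2*x + 2*e}"
      by (rule mp_comp_inc[OF m1]) auto
    have eqs: "\<forall>z\<in>{2*x - 2*e..2*x + 2*e}. \<phi> (tent (z / 2)) = \<phi> z"
      using e by (auto simp: tent_half)
    have m3: "monotone_piece \<phi> {2*x - 2*e..2*x + 2*e}" using m2 mp_cong[OF eqs] by simp
    have tx: "tent x = 2 * x" using True by (simp add: tent_half)
    show ?thesis unfolding LM_def tx
      by (rule exI[of _ "2*e"]) (use e m3 in auto)
  next
    case False
    then have x2: "x > 1/2" using x by simp
    define e where "e = min \<delta> (min (x - 1/2) (1 - x))"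
    have e: "0 < e" "e \<le> \<delta>" "e \<le> x - 1/2" "e \<le> 1 - x" unfolding e_def using d x x2 by auto
    have m1: "monotone_piece (\<lambda>y. \<phi> (tent y)) {x - e..x + e}" using mp_subset[OF d(2)] e by auto
    have m2: "monotone_piece (\<lambda>z. \<phi> (tent (1 - z / 2))) {2 - 2*x - 2*e..2 - 2*x + 2*e}"
      by (rule mp_comp_dec[OF m1]) auto
    have eqs: "\<forall>z\<in>{2 - 2*x - 2*e..2 - 2*x + 2*e}. \<phi> (tent (1 - z / 2)) = \<phi> z"
      using e by (auto simp: tent_half2)
    have m3: "monotone_piece \<phi> {2 - 2*x - 2*e..2 - 2*x + 2*e}" using m2 mp_cong[OF eqs] by simp
    have tx: "tent x = 2 - 2 * x" using x2 by (simp add: tent_half2)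
    show ?thesis unfolding LM_def tx
      by (rule exI[of _ "2*e"]) (use e m3 in auto)
  qed
qed

lemma LM_phi_tent:
  assumes x: "0 < x" "x < 1" "\<forall>j\<le>t. x \<noteq> a j" "\<phi> x \<noteq> 1/2"
  shows "LM (\<lambda>y. tent (\<phi> y)) x"
proof -
  obtain i where i: "i < t" "a i < x" "x < a (Suc i)" using locate_strict x by blast
  have ar: "0 \<le> a i" "a (Suc i) \<le> 1" using a_range i by auto
  define eps where "eps = \<bar>\<phi> x - 1/2\<bar>"
  have eps: "eps > 0" using x(4) unfolding eps_def by simp
  have "x \<in> {0..1}" using x by auto
  then obtain d where d: "d > 0" "\<forall>y\<in>{0..1}. dist y x < d \<longrightarrow> dist (\<phi> y) (\<phi> x) < eps"
    using cont eps unfolding continuous_on_iff by blast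
  define e where "e = min (d/2) (min (x - a i) (a (Suc i) - x))"
  have e: "0 < e" "e < d" "e \<le> x - a i" "e \<le> a (Suc i) - x" unfolding e_def using d i by auto
  define B where "B = {x - e..x + e}"
  have Blap: "B \<subseteq> {a i..a (Suc i)}" unfolding B_def using e by auto
  have B01: "B \<subseteq> {0..1}" using Blap ar by auto
  have close: "\<forall>y\<in>B. \<bar>\<phi> y - \<phi> x\<bar> < eps"
  proof
    fix y assume "y \<in> B"
    then have "y \<in> {0..1}" "dist y x < d" using B01 e unfolding B_def dist_real_def by auto
    then show "\<bar>\<phi> y - \<phi> x\<bar> < eps" using d(2) unfolding dist_real_def by auto
  qed
  have mB: "monotone_piece \<phi> B" using mp_subset[OF lap_mp[OF i(1)] Blap] .
  have mon: "monotone_piece (\<lambda>y. tent (\<phi> y)) B"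
  proof (cases "\<phi> x < 1/2")
    case True
    have side: "\<forall>y\<in>B. \<phi> y \<in> {..1/2}" using close True unfolding eps_def by auto
    from mB show ?thesis unfolding monotone_piece_def
    proof
      assume "monotone_on B (\<le>) (\<le>) \<phi>"
      then show "monotone_on B (\<le>) (\<le>) (\<lambda>y. tent (\<phi> y)) \<or> monotone_on B (\<le>) (\<ge>) (\<lambda>y. tent (\<phi> y))"
        using mp_comp_inc[OF mp_tent1 side] unfolding monotone_piece_def monotone_on_def by blast
    next
      assume "monotone_on B (\<le>) (\<ge>) \<phi>"
      then show "monotone_on B (\<le>) (\<le>) (\<lambda>y. tent (\<phi> y)) \<or> monotone_on B (\<le>) (\<ge>) (\<lambda>y. tent (\<phi> y))"
        using mp_comp_dec[OF mp_tent1 side] unfolding monotone_piece_def monotone_on_def by blast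
    qed
  next
    case False
    then have True': "\<phi> x > 1/2" using x(4) by simp
    have side: "\<forall>y\<in>B. \<phi> y \<in> {1/2..}" using close True' unfolding eps_def by auto
    from mB show ?thesis unfolding monotone_piece_def
    proof
      assume "monotone_on B (\<le>) (\<le>) \<phi>"
      then show "monotone_on B (\<le>) (\<le>) (\<lambda>y. tent (\<phi> y)) \<or> monotone_on B (\<le>) (\<ge>) (\<lambda>y. tent (\<phi> y))"
        using mp_comp_inc[OF mp_tent2 side] unfolding monotone_piece_def monotone_on_def by blast
    next
      assume "monotone_on B (\<le>) (\<ge>) \<phi>"
      then show "monotone_on B (\<le>) (\<le>) (\<lambda>y. tent (\<phi> y)) \<or> monotone_on B (\<le>) (\<ge>) (\<lambda>y. tent (\<phi> y))"
        using mp_comp_dec[OF mp_tent2 side] unfolding monotone_piece_def monotone_on_def by blast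
    qed
  qed
  have "0 \<le> x - e" "x + e \<le> 1" using Blap ar e by auto
  then show ?thesis unfolding LM_def using e mon unfolding B_def by blast
qed

end


context comm_setup begin

lemma tent_zero: "0 \<le> v \<Longrightarrow> v \<le> 1 \<Longrightarrow> tent v = 0 \<Longrightarrow> v = 0 \<or> v = 1"
  by (cases "v \<le> 1/2") (simp_all add: tent_half tent_half2)

lemma turning_vals:
  assumes i: "0 < i" "i < t"
  shows "\<phi> (a i) = 0 \<or> \<phi> (a i) = 1"
proof -
  define T where "T = {c. \<exists>i. 0 < i \<and> i < t \<and> c = a i \<and> 0 < \<phi> c \<and> \<phi> c < 1}"
  have finT: "finite T"
  proof -
    have "T \<subseteq> a ` {..t}" unfolding T_def by auto
    then show ?thesis using finite_subset by blast
  qed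
  have Tprop: "\<And>c. c \<in> T \<Longrightarrow> 0 < c \<and> c < 1"
  proof -
    fix c assume "c \<in> T"
    then obtain j where j: "0 < j" "j < t" "c = a j" unfolding T_def by auto
    show "0 < c \<and> c < 1" using a_less[of 0 j] a_less[of j t] j a0 at by auto
  qed
  define H1 where "H1 = (\<lambda>c. c / 2) ` T"
  define H2 where "H2 = (\<lambda>c. 1 - c / 2) ` T"
  have disj: "H1 \<inter> H2 = {}"
  proof (rule ccontr)
    assume "H1 \<inter> H2 \<noteq> {}"
    then obtain z where "z \<in> H1" "z \<in> H2" by blast
    then obtain c c' where cc: "c \<in> T" "c' \<in> T" "z = c / 2" "z = 1 - c' / 2" unfolding H1_def H2_def by blast
    then show False using Tprop[OF cc(1)] Tprop[OF cc(2)] by linarith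
  qed
  have c1: "card H1 = card T" unfolding H1_def by (rule card_image) (auto intro: inj_onI)
  have c2: "card H2 = card T" unfolding H2_def by (rule card_image) (auto intro: inj_onI)
  have key: "x \<in> T" if c: "c \<in> T" and xc: "x = c / 2 \<or> x = 1 - c / 2" for x c
  proof -
    obtain j where j: "0 < j" "j < t" "c = a j" "0 < \<phi> c" "\<phi> c < 1" using c unfolding T_def by auto
    have c01: "0 < c" "c < 1" using Tprop c by auto
    have x: "0 < x" "x < 1" "x \<noteq> 1/2" using xc c01 by auto
    have tx: "tent x = c" using xc c01 by (auto simp: tent_half tent_half2)
    have "\<not> LM \<phi> c" using notLM_a j by simp
    then have "\<not> LM (\<lambda>y. \<phi> (tent y)) x" using LM_tent x tx by auto
    moreover have "LM (\<lambda>y. \<phi> (tent y)) x = LM (\<lambda>y. tent (\<phi> y)) x"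
      by (rule LM_cong) (rule comm)
    ultimately have nl: "\<not> LM (\<lambda>y. tent (\<phi> y)) x" by simp
    have tp: "tent (\<phi> x) = \<phi> c" using comm[of x] x tx by simp
    have px: "0 \<le> \<phi> x" "\<phi> x \<le> 1" using maps[of x] x by auto
    have ph: "\<phi> x \<noteq> 1/2" using tp j by (auto simp: tent_def)
    have p0: "\<phi> x \<noteq> 0" using tp j by (auto simp: tent_def)
    have p1: "\<phi> x \<noteq> 1" using tp j by (auto simp: tent_def)
    have "\<not> (\<forall>k\<le>t. x \<noteq> a k)" using LM_phi_tent[of x] x ph nl by blast
    then obtain k where k: "k \<le> t" "x = a k" by blast
    have "k \<noteq> 0" proof assume "k = 0" then show False using k x a0 by simp qed
    moreover have "k \<noteq> t" proof assume "k = t" then show False using k x at by simp qed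
    ultimately show "x \<in> T" unfolding T_def using k px p0 p1 by auto
  qed
  have sub: "H1 \<union> H2 \<subseteq> T" unfolding H1_def H2_def using key by blast
  have "card (H1 \<union> H2) = card T + card T"
    using card_Un_disjoint[of H1 H2] finT disj c1 c2 unfolding H1_def H2_def by simp
  moreover have "card (H1 \<union> H2) \<le> card T" using card_mono[OF finT sub] .
  ultimately have "card T = 0" by simp
  then have Te: "T = {}" using finT by simp
  have pr: "0 \<le> \<phi> (a i)" "\<phi> (a i) \<le> 1" using maps a_range[of i] i by auto
  show ?thesis
  proof (rule ccontr)
    assume "\<not> (\<phi> (a i) = 0 \<or> \<phi> (a i) = 1)"
    then have "a i \<in> T" unfolding T_def using i pr by force
    then show False using Te by simp
  qed
qed

lemma phi1: "\<phi> 1 = 0 \<or> \<phi> 1 = 1"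
proof -
  have "tent (\<phi> 1) = \<phi> (tent 1)" using comm[of 1] by simp
  also have "\<dots> = 0" using phi0 by (simp add: tent_def)
  finally show ?thesis using tent_zero maps[of 1] by auto
qed

lemma phi_a: "i \<le> t \<Longrightarrow> \<phi> (a i) = (if even i then 0 else 1)"
proof (induction i)
  case 0 then show ?case using phi0 a0 by simp
next
  case (Suc i)
  have it: "i < t" using Suc.prems by simp
  have v: "\<phi> (a (Suc i)) = 0 \<or> \<phi> (a (Suc i)) = 1"
  proof (cases "Suc i = t")
    case True then show ?thesis using phi1 at by simp
  next
    case False then show ?thesis using turning_vals[of "Suc i"] Suc.prems by simp
  qed
  have ne: "\<phi> (a (Suc i)) \<noteq> \<phi> (a i)"
  proof -
    have "a i < a (Suc i)" using ainc it by blast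
    then show ?thesis using lap_strict[OF it] unfolding SI_def SD_def by fastforce
  qed
  show ?case using Suc.IH it v ne by (cases "even i") auto
qed

lemma lap_dir:
  assumes "i < t"
  shows "(even i \<longrightarrow> SI {a i..a (Suc i)}) \<and> (odd i \<longrightarrow> SD {a i..a (Suc i)})"
proof -
  have lt: "a i < a (Suc i)" using ainc assms by blast
  have e: "\<phi> (a i) = (if even i then 0 else 1)" "\<phi> (a (Suc i)) = (if even i then 1 else 0)"
    using phi_a[of i] phi_a[of "Suc i"] assms by auto
  from lap_strict[OF assms] show ?thesis
  proof
    assume s: "SI {a i..a (Suc i)}"
    then have "\<phi> (a i) < \<phi> (a (Suc i))" using lt unfolding SI_def by auto
    then show ?thesis using s e by (cases "even i") auto
  next
    assume s: "SD {a i..a (Suc i)}"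
    then have "\<phi> (a i) > \<phi> (a (Suc i))" using lt unfolding SD_def by auto
    then show ?thesis using s e by (cases "even i") auto
  qed
qed

end


context comm_setup begin

lemma b_exists:
  assumes i: "i < t"
  shows "\<exists>y. a i < y \<and> y < a (Suc i) \<and> \<phi> y = 1/2"
proof -
  have lt: "a i < a (Suc i)" using ainc i by blast
  have ar: "0 \<le> a i" "a (Suc i) \<le> 1" using a_range i by auto
  have ct: "continuous_on {a i..a (Suc i)} \<phi>" using continuous_on_subset[OF cont] ar by auto
  have e: "\<phi> (a i) = (if even i then 0 else 1)" "\<phi> (a (Suc i)) = (if even i then 1 else 0)"
    using phi_a[of i] phi_a[of "Suc i"] i by auto
  obtain y where y: "a i \<le> y" "y \<le> a (Suc i)" "\<phi> y = 1/2"
  proof (cases "even i")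
    case True
    then show ?thesis using IVT'[of \<phi> "a i" "1/2" "a (Suc i)"] e lt ct that by auto
  next
    case False
    then show ?thesis using IVT2'[of \<phi> "a (Suc i)" "1/2" "a i"] e lt ct that by auto
  qed
  have "y \<noteq> a i" "y \<noteq> a (Suc i)" using y e by (auto split: if_splits)
  then show ?thesis using y by (intro exI[of _ y]) auto
qed

definition b :: "nat \<Rightarrow> real" where
  "b i = (SOME y. a i < y \<and> y < a (Suc i) \<and> \<phi> y = 1/2)"

lemma b_props: "i < t \<Longrightarrow> a i < b i \<and> b i < a (Suc i) \<and> \<phi> (b i) = 1/2"
  unfolding b_def using someI_ex[OF b_exists] by blast

lemma Z_char:
  assumes x: "0 \<le> x" "x \<le> 1" "\<phi> x = 0 \<or> \<phi> x = 1"
  shows "\<exists>j\<le>t. x = a j"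
proof (rule ccontr)
  assume nz: "\<not> (\<exists>j\<le>t. x = a j)"
  obtain i where i: "i < t" "a i \<le> x" "x \<le> a (Suc i)" using locate x by blast
  have s: "a i < x" "x < a (Suc i)" using nz i by (metis less_eq_real_def Suc_leI less_imp_le_nat)+
  have e: "\<phi> (a i) = (if even i then 0 else 1)" "\<phi> (a (Suc i)) = (if even i then 1 else 0)"
    using phi_a[of i] phi_a[of "Suc i"] i by auto
  have mem: "a i \<in> {a i..a (Suc i)}" "x \<in> {a i..a (Suc i)}" "a (Suc i) \<in> {a i..a (Suc i)}"
    using s by auto
  from lap_strict[OF i(1)] show False
  proof
    assume "SI {a i..a (Suc i)}"
    then have "\<phi> (a i) < \<phi> x" "\<phi> x < \<phi> (a (Suc i))" using mem s unfolding SI_def by auto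
    then show False using e x(3) by (cases "even i") auto
  next
    assume "SD {a i..a (Suc i)}"
    then have "\<phi> (a i) > \<phi> x" "\<phi> x > \<phi> (a (Suc i))" using mem s unfolding SD_def by auto
    then show False using e x(3) by (cases "even i") auto
  qed
qed

lemma S_char:
  assumes x: "0 \<le> x" "x \<le> 1" "\<phi> x = 0 \<or> \<phi> x = 1/2 \<or> \<phi> x = 1"
  shows "\<exists>i<t. x = a i \<or> x = b i \<or> x = a (Suc i)"
proof -
  obtain i where i: "i < t" "a i \<le> x" "x \<le> a (Suc i)" using locate x by blast
  show ?thesis
  proof (cases "x = a i \<or> x = a (Suc i)")
    case True then show ?thesis using i by blast
  next
    case False
    then have s: "a i < x" "x < a (Suc i)" using i by auto
    have e: "\<phi> (a i) = (if even i then 0 else 1)" "\<phi> (a (Suc i)) = (if even i then 1 else 0)"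
      using phi_a[of i] phi_a[of "Suc i"] i by auto
    have bp: "a i < b i" "b i < a (Suc i)" "\<phi> (b i) = 1/2" using b_props[OF i(1)] by auto
    have mem: "a i \<in> {a i..a (Suc i)}" "x \<in> {a i..a (Suc i)}" "a (Suc i) \<in> {a i..a (Suc i)}"
      "b i \<in> {a i..a (Suc i)}" using s bp by auto
    have inj: "\<forall>y\<in>{a i..a (Suc i)}. \<forall>z\<in>{a i..a (Suc i)}. \<phi> y = \<phi> z \<longrightarrow> y = z"
      using lap_strict[OF i(1)] unfolding SI_def SD_def by (metis linorder_neqE less_irrefl)
    have "\<phi> x \<noteq> 0 \<and> \<phi> x \<noteq> 1"
      using lap_strict[OF i(1)] mem s e unfolding SI_def SD_def by (cases "even i") force+
    then have "\<phi> x = 1/2" using x by auto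
    then have "x = b i" using inj mem bp by auto
    then show ?thesis using i by blast
  qed
qed

definition cfun :: "nat \<Rightarrow> real" where
  "cfun j = (if even j then a (j div 2) else b (j div 2))"
definition dfun :: "nat \<Rightarrow> real" where
  "dfun j = (if j \<le> t then a j / 2 else 1 - a (2*t - j) / 2)"

lemma cfun_inc: "\<forall>i j. i < j \<longrightarrow> j \<le> 2*t \<longrightarrow> cfun i < cfun j"
proof -
  have "\<forall>j<2*t. cfun j < cfun (Suc j)"
  proof (intro allI impI)
    fix j assume j: "j < 2*t"
    show "cfun j < cfun (Suc j)"
    proof (cases "even j")
      case True
      have "j div 2 < t" using j by simp
      then show ?thesis using True b_props[of "j div 2"] unfolding cfun_def by simp
    next
      case False
      have "j div 2 < t" using j by simp
      moreover have "Suc j div 2 = Suc (j div 2)" using False by presburger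
      ultimately show ?thesis using False b_props[of "j div 2"] unfolding cfun_def by simp
    qed
  qed
  then show ?thesis using chain_less by blast
qed

lemma dfun_inc: "\<forall>i j. i < j \<longrightarrow> j \<le> 2*t \<longrightarrow> dfun i < dfun j"
proof -
  have "\<forall>j<2*t. dfun j < dfun (Suc j)"
  proof (intro allI impI)
    fix j assume j: "j < 2*t"
    show "dfun j < dfun (Suc j)"
    proof (cases "Suc j \<le> t")
      case True
      then show ?thesis using a_less[of j "Suc j"] unfolding dfun_def by simp
    next
      case False
      show ?thesis
      proof (cases "j = t")
        case True
        have "a (2*t - Suc j) < 1" using a_less[of "2*t - Suc j" t] at True tpos by simp
        then show ?thesis using True at unfolding dfun_def by simp
      next
        case False
        then have jt: "j > t" using \<open>\<not> Suc j \<le> t\<close> by simp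
        have "a (2*t - Suc j) < a (2*t - j)" using a_less[of "2*t - Suc j" "2*t - j"] jt j by simp
        then show ?thesis using jt unfolding dfun_def by simp
      qed
    qed
  qed
  then show ?thesis using chain_less by blast
qed

definition SS :: "real set" where
  "SS = {x. 0 \<le> x \<and> x \<le> 1 \<and> (\<phi> x = 0 \<or> \<phi> x = 1/2 \<or> \<phi> x = 1)}"

lemma cfun_img: "cfun ` {..2*t} = SS"
proof
  show "cfun ` {..2*t} \<subseteq> SS"
  proof
    fix x assume "x \<in> cfun ` {..2*t}"
    then obtain j where j: "j \<le> 2*t" "x = cfun j" by auto
    show "x \<in> SS"
    proof (cases "even j")
      case True
      have "j div 2 \<le> t" using j by simp
      then show ?thesis using True j a_range phi_a unfolding cfun_def SS_def by auto
    next
      case False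
      have jt: "j div 2 < t" using j False by presburger
      have "0 \<le> a (j div 2)" "a (Suc (j div 2)) \<le> 1" using a_range jt by auto
      then show ?thesis using False j b_props[OF jt] unfolding cfun_def SS_def by auto
    qed
  qed
next
  show "SS \<subseteq> cfun ` {..2*t}"
  proof
    fix x assume "x \<in> SS"
    then obtain i where i: "i < t" "x = a i \<or> x = b i \<or> x = a (Suc i)"
      using S_char unfolding SS_def by blast
    have c1: "cfun (2*i) = a i" "cfun (2*i+1) = b i" "cfun (2*(Suc i)) = a (Suc i)"
      unfolding cfun_def by auto
    have "2*i \<le> 2*t" "2*i+1 \<le> 2*t" "2*(Suc i) \<le> 2*t" using i by auto
    then show "x \<in> cfun ` {..2*t}" using i c1 by (metis atMost_iff image_eqI)
  qed
qed

lemma tent_vals: "0 \<le> v \<Longrightarrow> v \<le> 1 \<Longrightarrow> (tent v = 0 \<or> tent v = 1) \<longleftrightarrow> (v = 0 \<or> v = 1/2 \<or> v = 1)"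
  by (cases "v \<le> 1/2") (auto simp: tent_half tent_half2)

lemma SS_tent: "x \<in> SS \<longleftrightarrow> 0 \<le> x \<and> x \<le> 1 \<and> (\<phi> (tent x) = 0 \<or> \<phi> (tent x) = 1)"
proof -
  have "0 \<le> x \<Longrightarrow> x \<le> 1 \<Longrightarrow> (\<phi> x = 0 \<or> \<phi> x = 1/2 \<or> \<phi> x = 1) \<longleftrightarrow> (\<phi> (tent x) = 0 \<or> \<phi> (tent x) = 1)"
    using tent_vals[of "\<phi> x"] maps[of x] comm[of x] by auto
  then show ?thesis unfolding SS_def by auto
qed

lemma dfun_img: "dfun ` {..2*t} = SS"
proof
  show "dfun ` {..2*t} \<subseteq> SS"
  proof
    fix x assume "x \<in> dfun ` {..2*t}"
    then obtain j where j: "j \<le> 2*t" "x = dfun j" by auto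
    show "x \<in> SS"
    proof (cases "j \<le> t")
      case True
      have x: "x = a j / 2" using True j unfolding dfun_def by simp
      have r: "0 \<le> a j" "a j \<le> 1" using a_range True by auto
      have tx: "tent x = a j" using x r by (simp add: tent_half)
      have x01: "0 \<le> x" "x \<le> 1" using x r by simp_all
      have pa: "\<phi> (a j) = 0 \<or> \<phi> (a j) = 1" using phi_a[OF True] by simp
      then have "\<phi> (tent x) = 0 \<or> \<phi> (tent x) = 1" by (simp only: tx)
      then show ?thesis unfolding SS_tent using x01 by blast
    next
      case False
      define k where "k = 2*t - j"
      have k: "k \<le> t" unfolding k_def using False j by simp
      have x: "x = 1 - a k / 2" using False j unfolding dfun_def k_def by simp
      have r: "0 \<le> a k" "a k \<le> 1" using a_range k by auto
      have tx: "tent x = a k" using x r by (simp add: tent_half2)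
      have x01: "0 \<le> x" "x \<le> 1" using x r by simp_all
      have pa: "\<phi> (a k) = 0 \<or> \<phi> (a k) = 1" using phi_a[OF k] by simp
      then have "\<phi> (tent x) = 0 \<or> \<phi> (tent x) = 1" by (simp only: tx)
      then show ?thesis unfolding SS_tent using x01 by blast
    qed
  qed
next
  show "SS \<subseteq> dfun ` {..2*t}"
  proof
    fix x assume "x \<in> SS"
    then have x: "0 \<le> x" "x \<le> 1" "\<phi> (tent x) = 0 \<or> \<phi> (tent x) = 1" unfolding SS_tent by auto
    have "0 \<le> tent x" "tent x \<le> 1" using tent_01 x by auto
    then obtain k where k: "k \<le> t" "tent x = a k" using Z_char x(3) by blast
    show "x \<in> dfun ` {..2*t}"
    proof (cases "x \<le> 1/2")
      case True
      then have "x = a k / 2" using k by (simp add: tent_half)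
      then have "x = dfun k" using k unfolding dfun_def by simp
      then show ?thesis using k by auto
    next
      case False
      then have xk: "x = 1 - a k / 2" using k by (simp add: tent_half2)
      have "k \<noteq> t" using xk at False by auto
      then have "\<not> 2*t - k \<le> t" "2*t - (2*t - k) = k" using k by auto
      then have "x = dfun (2*t - k)" using xk unfolding dfun_def by simp
      moreover have "2*t - k \<le> 2*t" by simp
      ultimately show ?thesis by auto
    qed
  qed
qed

lemma cd_eq: "j \<le> 2*t \<Longrightarrow> cfun j = dfun j"
  using enum_unique[OF cfun_inc dfun_inc] cfun_img dfun_img by simp

end


context comm_setup begin

lemma a_pos: "i \<le> t \<Longrightarrow> a i = real i / real t"
proof -
  define e where "e i = a i - real i / real t" for i
  define E where "E = Max ((\<lambda>i. \<bar>e i\<bar>) ` {..t})"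
  have tp: "real t > 0" using tpos by simp
  have EM: "\<bar>e i\<bar> \<le> E" if "i \<le> t" for i unfolding E_def using that by (intro Max_ge) auto
  have rel: "\<bar>e i\<bar> \<le> E / 2" if i: "i \<le> t" for i
  proof -
    have "a i = dfun (2*i)" using cd_eq[of "2*i"] i unfolding cfun_def by simp
    show ?thesis
    proof (cases "2*i \<le> t")
      case True
      then have ai: "a i = a (2*i) / 2" using \<open>a i = dfun (2*i)\<close> unfolding dfun_def by simp
      have "e i = e (2*i) / 2" unfolding e_def ai using tp by (simp add: field_simps)
      then show ?thesis using EM[OF True] by simp
    next
      case False
      define k where "k = 2*t - 2*i"
      have k: "k \<le> t" unfolding k_def using False by simp
      have rk: "real k = 2 * real t - 2 * real i" unfolding k_def using i by (simp add: of_nat_diff)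
      have ai: "a i = 1 - a k / 2" using \<open>a i = dfun (2*i)\<close> False unfolding dfun_def k_def by simp
      have "e i = - e k / 2" unfolding e_def ai rk using tp by (simp add: field_simps)
      then show ?thesis using EM[OF k] by simp
    qed
  qed
  have "E \<in> (\<lambda>i. \<bar>e i\<bar>) ` {..t}" unfolding E_def by (intro Max_in) auto
  then obtain i0 where "i0 \<le> t" "E = \<bar>e i0\<bar>" by auto
  then have "E \<le> 0" using rel[of i0] by simp
  then show "i \<le> t \<Longrightarrow> a i = real i / real t" using EM[of i] unfolding e_def by simp
qed

lemma b_pos:
  assumes i: "i < t"
  shows "b i = (2 * real i + 1) / (2 * real t)"
proof -
  have tp: "real t > 0" using tpos by simp
  have bi: "b i = dfun (2*i+1)" using cd_eq[of "2*i+1"] i unfolding cfun_def by simp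
  show ?thesis
  proof (cases "2*i+1 \<le> t")
    case True
    then show ?thesis using bi a_pos[OF True] tp unfolding dfun_def by (simp add: field_simps)
  next
    case False
    define k where "k = 2*t - (2*i+1)"
    have k: "k \<le> t" unfolding k_def using False by simp
    have rk: "real k = 2 * real t - 2 * real i - 1" unfolding k_def using i by (simp add: of_nat_diff)
    have "b i = 1 - a k / 2" using bi False unfolding dfun_def k_def by simp
    then show ?thesis using a_pos[OF k] rk tp by (simp add: field_simps)
  qed
qed

lemma xi_lap:
  assumes i: "i < t" and y: "a i \<le> y" "y \<le> a (Suc i)"
  shows "xi t y = (if even i then real t * y - real i else 1 - (real t * y - real i))"
proof -
  have tp: "real t > 0" using tpos by simp
  have ai: "a i = real i / real t" "a (Suc i) = (real i + 1) / real t"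
    using a_pos[of i] a_pos[of "Suc i"] i by auto
  have r: "0 \<le> real t * y - real i" "real t * y - real i \<le> 1"
    using y ai tp by (simp_all add: field_simps)
  have "xi t y = P (of_int (int i) + (real t * y - real i))" by (simp add: xi_P)
  also have "\<dots> = (if even (int i) then real t * y - real i else 1 - (real t * y - real i))"
    using P_int_add[OF r] .
  finally show ?thesis by simp
qed

lemma same_side:
  assumes y: "0 \<le> y" "y \<le> 1"
  shows "(\<phi> y \<le> 1/2 \<and> xi t y \<le> 1/2) \<or> (\<phi> y \<ge> 1/2 \<and> xi t y \<ge> 1/2)"
proof -
  have tp: "real t > 0" using tpos by simp
  obtain i where i: "i < t" "a i \<le> y" "y \<le> a (Suc i)" using locate y by blast
  have bp: "a i < b i" "b i < a (Suc i)" "\<phi> (b i) = 1/2" using b_props[OF i(1)] by auto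
  have bpos: "real t * b i - real i = 1/2" using b_pos[OF i(1)] tp by (simp add: field_simps)
  have xl: "xi t y = (if even i then real t * y - real i else 1 - (real t * y - real i))"
    using xi_lap[OF i] .
  have mem: "y \<in> {a i..a (Suc i)}" "b i \<in> {a i..a (Suc i)}" using i bp by auto
  have tm: "y \<le> b i \<Longrightarrow> real t * y \<le> real t * b i" "b i \<le> y \<Longrightarrow> real t * b i \<le> real t * y"
    using tp by simp_all
  show ?thesis
  proof (cases "even i")
    case True
    then have m: "monotone_on {a i..a (Suc i)} (\<le>) (\<le>) \<phi>" using lap_dir[OF i(1)] SI_mono by blast
    show ?thesis
    proof (cases "y \<le> b i")
      case True
      then have "\<phi> y \<le> 1/2" using m mem bp unfolding monotone_on_def by fastforce
      then show ?thesis using xl \<open>even i\<close> tm(1)[OF True] bpos by auto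
    next
      case False
      then have "\<phi> y \<ge> 1/2" using m mem bp unfolding monotone_on_def by fastforce
      then show ?thesis using xl \<open>even i\<close> tm(2) False bpos by auto
    qed
  next
    case False
    then have m: "monotone_on {a i..a (Suc i)} (\<le>) (\<ge>) \<phi>" using lap_dir[OF i(1)] SD_mono by blast
    show ?thesis
    proof (cases "y \<le> b i")
      case True
      then have "\<phi> y \<ge> 1/2" using m mem bp unfolding monotone_on_def by fastforce
      then show ?thesis using xl \<open>odd i\<close> tm(1)[OF True] bpos by auto
    next
      case False
      then have "\<phi> y \<le> 1/2" using m mem bp unfolding monotone_on_def by fastforce
      then show ?thesis using xl \<open>odd i\<close> tm(2) False bpos by auto
    qed
  qed
qed

lemma main: "\<forall>x\<in>{0..1}. \<phi> x = xi t x"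
proof -
  define D where "D y = \<bar>\<phi> y - xi t y\<bar>" for y
  have xr: "0 \<le> xi t y \<and> xi t y \<le> 1" for y using P_range by (simp add: xi_P)
  have Dle: "D y \<le> 1" if "0 \<le> y" "y \<le> 1" for y using maps[OF that] xr[of y] unfolding D_def by auto
  have half: "D y \<le> D (tent y) / 2" if y: "0 \<le> y" "y \<le> 1" for y
  proof -
    have e1: "\<phi> (tent y) = tent (\<phi> y)" using comm[OF y] .
    have e2: "xi t (tent y) = tent (xi t y)" using xi_comm[OF y] .
    from same_side[OF y] show ?thesis
    proof
      assume "\<phi> y \<le> 1/2 \<and> xi t y \<le> 1/2"
      then show ?thesis unfolding D_def e1 e2 by (auto simp: tent_half abs_if)
    next
      assume "\<phi> y \<ge> 1/2 \<and> xi t y \<ge> 1/2"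
      then show ?thesis unfolding D_def e1 e2 by (auto simp: tent_half2 abs_if)
    qed
  qed
  define M where "M = Sup (D ` {0..1})"
  have bdd: "bdd_above (D ` {0..1})" using Dle by (intro bdd_aboveI[of _ 1]) auto
  have DM: "D y \<le> M" if "0 \<le> y" "y \<le> 1" for y unfolding M_def using bdd that by (intro cSup_upper) auto
  have DM2: "D y \<le> M / 2" if y: "0 \<le> y" "y \<le> 1" for y
    using half[OF y] DM[of "tent y"] tent_01[OF y] by simp
  have "M \<le> M / 2" unfolding M_def using DM2 by (intro cSup_least) (auto simp: M_def)
  then have "M \<le> 0" by simp
  then have "\<forall>y\<in>{0..1}. D y \<le> 0" using DM by fastforce
  then show ?thesis unfolding D_def by auto
qed

end


lemma mp_outer:
  assumes "monotone_piece F T" "\<forall>z\<in>T. F z \<in> U" "\<forall>u\<in>U. \<forall>v\<in>U. u \<le> v \<longrightarrow> G u \<le> G v"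
  shows "monotone_piece (\<lambda>z. G (F z)) T"
  using assms unfolding monotone_piece_def monotone_on_def by (elim disjE) (blast, blast)

theorem lemma4p1:
  fixes g h k \<psi> :: "real \<Rightarrow> real" and t :: nat
  assumes g_maps: "g ` {0..1} \<subseteq> {0..1}"
    and g_pl: "piecewise_linear g"
    and g_um: "unimodal g"
    and h_homeo: "homeomorphism {0..1} {0..1} h k"
    and conj: "\<forall>x \<in> {0..1}. h (tent x) = g (h x)"
    and psi_cont: "continuous_on {0..1} \<psi>"
    and psi_maps: "\<psi> ` {0..1} \<subseteq> {0..1}"
    and psi_nonconst: "\<exists>x \<in> {0..1}. \<exists>y \<in> {0..1}. \<psi> x \<noteq> \<psi> y"
    and comm: "\<forall>x \<in> {0..1}. g (\<psi> x) = \<psi> (g x)"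
    and t_pos: "t \<ge> 1"
    and laps: "monotonicity_laps \<psi> t"
  shows "\<forall>x \<in> {0..1}. \<psi> x = h (xi t (k x))"
proof -
  have kh: "\<And>x. x \<in> {0..1} \<Longrightarrow> k (h x) = x" and himg: "h ` {0..1} = {0..1}"
    and hc: "continuous_on {0..1} h" and hk: "\<And>y. y \<in> {0..1} \<Longrightarrow> h (k y) = y"
    and kimg: "k ` {0..1} = {0..1}" and kc: "continuous_on {0..1} k"
    using h_homeo unfolding homeomorphism_def by auto
  have hr: "\<And>x. x \<in> {0..1} \<Longrightarrow> h x \<in> {0..1}" using himg by blast
  have kr: "\<And>x. x \<in> {0..1} \<Longrightarrow> k x \<in> {0..1}" using kimg by blast
  have g0: "g 0 = 0" using g_um unfolding unimodal_def by blast
  have hinj: "inj_on h S" if "S \<subseteq> {0..1}" for S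
    by (rule inj_on_inverseI[of _ k]) (use kh that in auto)
  have h0: "h 0 = 0"
  proof -
    have "(0::real) \<in> h ` {0..1}" using himg by simp
    then obtain x0 where x0: "x0 \<in> {0..1}" "h x0 = 0" by auto
    have "x0 = 0 \<or> x0 = 1"
    proof (rule ccontr)
      assume "\<not> (x0 = 0 \<or> x0 = 1)"
      then have "0 < x0" "x0 < 1" using x0 by auto
      from continuous_inj_imp_mono[OF this hc hinj[OF order_refl]]
      show False using x0 hr[of 0] hr[of 1] by auto
    qed
    then show ?thesis
    proof
      assume "x0 = 1"
      then have "h 1 = 0" using x0 by simp
      moreover have "h (tent 1) = g (h 1)" using conj by auto
      ultimately have "h 0 = 0" using g0 by (simp add: tent_def)
      then have "h 0 = h 1" using \<open>h 1 = 0\<close> by simp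
      then have "k (h 0) = k (h 1)" by simp
      then show ?thesis using kh[of 0] kh[of 1] by simp
    qed (use x0 in simp)
  qed
  have hinc: "h x < h y" if xy: "0 \<le> x" "x < y" "y \<le> 1" for x y
  proof (cases "x = 0")
    case True
    have "h y \<noteq> h 0"
    proof
      assume "h y = h 0"
      then have "k (h y) = k (h 0)" by simp
      then show False using kh[of y] kh[of 0] xy by simp
    qed
    then show ?thesis using True h0 hr[of y] xy by auto
  next
    case False
    then have x: "0 < x" "x < y" using xy by auto
    have c: "continuous_on {0..y} h" using continuous_on_subset[OF hc] xy by auto
    have i: "inj_on h {0..y}" using hinj xy by auto
    from continuous_inj_imp_mono[OF x c i] show ?thesis using h0 hr[of x] xy by auto
  qed
  have hmono: "h x \<le> h y" if "0 \<le> x" "x \<le> y" "y \<le> 1" for x y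
    using hinc[of x y] that by (cases "x = y") auto
  have kinc: "k x < k y" if xy: "0 \<le> x" "x < y" "y \<le> 1" for x y
  proof (rule ccontr)
    assume "\<not> k x < k y"
    then have "k y \<le> k x" by simp
    moreover have "k x \<in> {0..1}" "k y \<in> {0..1}" using kr xy by auto
    ultimately have "h (k y) \<le> h (k x)" using hmono by auto
    then show False using hk[of x] hk[of y] xy by auto
  qed
  have kmono: "k x \<le> k y" if "0 \<le> x" "x \<le> y" "y \<le> 1" for x y
    using kinc[of x y] that by (cases "x = y") auto
  have h1: "h 1 = 1"
  proof -
    have "(1::real) \<in> h ` {0..1}" using himg by simp
    then obtain x1 where x1: "x1 \<in> {0..1}" "h x1 = 1" by auto
    show ?thesis
    proof (cases "x1 = 1")
      case False
      then have "h x1 < h 1" using hinc[of x1 1] x1 by auto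
      then show ?thesis using x1 hr[of 1] by auto
    qed (use x1 in simp)
  qed
  have k0: "k 0 = 0" using kh[of 0] h0 by simp
  have k1: "k 1 = 1" using kh[of 1] h1 by simp
  obtain a where a: "a 0 = 0" "a t = 1" "\<forall>i<t. a i < a (Suc i)"
    "\<forall>i<t. monotone_piece \<psi> {a i..a (Suc i)}"
    "\<forall>i. Suc i < t \<longrightarrow> \<not> monotone_piece \<psi> {a i..a (Suc (Suc i))}"
    using laps unfolding monotonicity_laps_def by blast
  have ale: "a i \<le> a j" if "i \<le> j" "j \<le> t" for i j
    using chain_less[OF a(3), of i j] that by (cases "i = j") auto
  have ar: "a i \<in> {0..1}" if "i \<le> t" for i using ale[of 0 i] ale[of i t] a that by auto
  define \<phi> where "\<phi> x = k (\<psi> (h x))" for x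
  define a' where "a' i = k (a i)" for i
  have psir: "\<And>x. x \<in> {0..1} \<Longrightarrow> \<psi> x \<in> {0..1}" using psi_maps by blast
  interpret cs: comm_setup \<phi> t a'
  proof
    show "continuous_on {0..1} \<phi>" unfolding \<phi>_def
    proof (rule continuous_on_compose2[OF kc _ ])
      show "continuous_on {0..1} (\<lambda>x. \<psi> (h x))"
        by (rule continuous_on_compose2[OF psi_cont hc]) (use hr in auto)
      show "(\<lambda>x. \<psi> (h x)) ` {0..1} \<subseteq> {0..1}" using hr psir by auto
    qed
  next
    fix x :: real assume "0 \<le> x" "x \<le> 1"
    then show "0 \<le> \<phi> x \<and> \<phi> x \<le> 1" unfolding \<phi>_def using hr psir kr by auto
  next
    fix x :: real assume x: "0 \<le> x" "x \<le> 1"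
    define z where "z = \<psi> (h x)"
    have z: "z \<in> {0..1}" unfolding z_def using hr psir x by auto
    have "\<phi> (tent x) = k (\<psi> (g (h x)))" unfolding \<phi>_def using conj x by auto
    also have "\<dots> = k (g z)" unfolding z_def using comm hr x by auto
    also have "g z = h (tent (k z))" using conj kr[OF z] hk[OF z] by auto
    also have "k (h (tent (k z))) = tent (k z)" using kh tent_01 kr[OF z] by auto
    finally show "\<phi> (tent x) = tent (\<phi> x)" unfolding \<phi>_def z_def .
  next
    obtain x y where xy: "x \<in> {0..1}" "y \<in> {0..1}" "\<psi> x \<noteq> \<psi> y" using psi_nonconst by blast
    have "\<phi> (k x) = k (\<psi> x)" "\<phi> (k y) = k (\<psi> y)" unfolding \<phi>_def using hk xy by auto
    moreover have "k (\<psi> x) \<noteq> k (\<psi> y)"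
    proof
      assume "k (\<psi> x) = k (\<psi> y)"
      then have "h (k (\<psi> x)) = h (k (\<psi> y))" by simp
      then show False using hk psir xy by auto
    qed
    moreover have "k x \<in> {0..1}" "k y \<in> {0..1}" using kr xy by auto
    ultimately show "\<exists>x\<in>{0..1}. \<exists>y\<in>{0..1}. \<phi> x \<noteq> \<phi> y" by metis
  next
    show "1 \<le> t" by (rule t_pos)
    show "a' 0 = 0" unfolding a'_def using a k0 by simp
    show "a' t = 1" unfolding a'_def using a k1 by simp
    show "\<forall>i<t. a' i < a' (Suc i)" unfolding a'_def
    proof (intro allI impI)
      fix i assume i: "i < t"
      have "a i \<in> {0..1}" "a (Suc i) \<in> {0..1}" using ar i by auto
      then show "k (a i) < k (a (Suc i))" using kinc a(3) i by auto
    qed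
  next
    show "\<forall>i<t. monotone_piece \<phi> {a' i..a' (Suc i)}"
    proof (intro allI impI)
      fix i assume i: "i < t"
      have r: "a i \<in> {0..1}" "a (Suc i) \<in> {0..1}" using ar i by auto
      have m1: "monotone_piece (\<lambda>z. \<psi> (h z)) {a' i..a' (Suc i)}"
      proof (rule mp_comp_inc[OF a(4)[rule_format, OF i]])
        show "\<forall>z\<in>{a' i..a' (Suc i)}. h z \<in> {a i..a (Suc i)}"
        proof
          fix z assume z: "z \<in> {a' i..a' (Suc i)}"
          have kr2: "k (a i) \<in> {0..1}" "k (a (Suc i)) \<in> {0..1}" using kr r by auto
          have z01: "0 \<le> z" "z \<le> 1" using z kr2 unfolding a'_def by auto
          have "h (k (a i)) \<le> h z" "h z \<le> h (k (a (Suc i)))" using hmono z z01 kr2 unfolding a'_def by auto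
          then show "h z \<in> {a i..a (Suc i)}" using hk r by auto
        qed
        show "\<forall>z1\<in>{a' i..a' (Suc i)}. \<forall>z2\<in>{a' i..a' (Suc i)}. z1 \<le> z2 \<longrightarrow> h z1 \<le> h z2"
        proof (intro ballI impI)
          fix z1 z2 assume z: "z1 \<in> {a' i..a' (Suc i)}" "z2 \<in> {a' i..a' (Suc i)}" "z1 \<le> z2"
          have kr2: "k (a i) \<in> {0..1}" "k (a (Suc i)) \<in> {0..1}" using kr r by auto
          then show "h z1 \<le> h z2" using hmono z unfolding a'_def by auto
        qed
      qed
      show "monotone_piece \<phi> {a' i..a' (Suc i)}" unfolding \<phi>_def
      proof (rule mp_outer[OF m1])
        show "\<forall>z\<in>{a' i..a' (Suc i)}. \<psi> (h z) \<in> {0..1}"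
        proof
          fix z assume z: "z \<in> {a' i..a' (Suc i)}"
          have kr2: "k (a i) \<in> {0..1}" "k (a (Suc i)) \<in> {0..1}" using kr r by auto
          then have "z \<in> {0..1}" using z unfolding a'_def by auto
          then show "\<psi> (h z) \<in> {0..1}" using hr psir by auto
        qed
        show "\<forall>u\<in>{0..1}. \<forall>v\<in>{0..1}. u \<le> v \<longrightarrow> k u \<le> k v" using kmono by auto
      qed
    qed
  next
    show "\<forall>i. Suc i < t \<longrightarrow> \<not> monotone_piece \<phi> {a' i..a' (Suc (Suc i))}"
    proof (intro allI impI notI)
      fix i assume i: "Suc i < t" and m: "monotone_piece \<phi> {a' i..a' (Suc (Suc i))}"
      have r: "a i \<in> {0..1}" "a (Suc (Suc i)) \<in> {0..1}" using ar i by auto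
      have m1: "monotone_piece (\<lambda>z. \<phi> (k z)) {a i..a (Suc (Suc i))}"
      proof (rule mp_comp_inc[OF m])
        show "\<forall>z\<in>{a i..a (Suc (Suc i))}. k z \<in> {a' i..a' (Suc (Suc i))}"
          unfolding a'_def using kmono r by auto
        show "\<forall>z1\<in>{a i..a (Suc (Suc i))}. \<forall>z2\<in>{a i..a (Suc (Suc i))}. z1 \<le> z2 \<longrightarrow> k z1 \<le> k z2"
          using kmono r by auto
      qed
      have m2: "monotone_piece (\<lambda>z. h (\<phi> (k z))) {a i..a (Suc (Suc i))}"
      proof (rule mp_outer[OF m1])
        show "\<forall>z\<in>{a i..a (Suc (Suc i))}. \<phi> (k z) \<in> {0..1}"
        proof
          fix z assume "z \<in> {a i..a (Suc (Suc i))}"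
          then have "z \<in> {0..1}" using r by auto
          then show "\<phi> (k z) \<in> {0..1}" unfolding \<phi>_def using hr psir kr by auto
        qed
        show "\<forall>u\<in>{0..1}. \<forall>v\<in>{0..1}. u \<le> v \<longrightarrow> h u \<le> h v" using hmono by auto
      qed
      have eq: "\<forall>z\<in>{a i..a (Suc (Suc i))}. h (\<phi> (k z)) = \<psi> z"
      proof
        fix z assume "z \<in> {a i..a (Suc (Suc i))}"
        then have z: "z \<in> {0..1}" using r by auto
        show "h (\<phi> (k z)) = \<psi> z" unfolding \<phi>_def using hk[OF z] hk[OF psir[OF z]] by simp
      qed
      have "monotone_piece \<psi> {a i..a (Suc (Suc i))}" using m2 mp_cong[OF eq] by simp
      then show False using a(5) i by blast
    qed
  qed
  show ?thesis
  proof
    fix x :: real assume x: "x \<in> {0..1}"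
    have "\<psi> x = h (\<phi> (k x))" unfolding \<phi>_def using hk[OF x] hk[OF psir[OF x]] by simp
    also have "\<phi> (k x) = xi t (k x)" using cs.main kr[OF x] by blast
    finally show "\<psi> x = h (xi t (k x))" .
  qed
qed


end
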